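(* If $\boldsymbol{\mu}$ is a quantum universal semi-density matrix, then $\operatorname{tr}(\boldsymbol{\mu}(N))<1$ for all but finitely many $N\in\mathbb{N}^+$.
   Context: For $N\in\mathbb{N}^+$, $\mathrm{Her}(N)$ is the set of $N\times N$ Hermitian matrices and $\mathrm{Her}_Q(N)$ those with entries in $\{a+ib:a,b\in\mathbb{Q}\}$; $A\leqslant B$ means $B-A$ is positive semi-definite. A lower semicomputable semi-density matrix is a map $\sigma:\mathbb{N}^+\to\bigcup_{N\ge1}\mathrm{Her}(N)$ such that (i) for each $N$, $\sigma(N)\in\mathrm{Her}(N)$, $0\leqslant\sigma(N)$ and $\operatorname{tr}\sigma(N)\le 1$; (ii) there is a total recursive $f:\mathbb{N}^+\times\mathbb{N}\to\bigcup_{N\ge1}\mathrm{Her}_Q(N)$ with, for each $N$, $f(N,k)\in\mathrm{Her}_Q(N)$, $f(N,k)\leqslant f(N,k+1)$ for all $k$, and $\lim_{k\to\infty}f(N,k)=\sigma(N)$. A quantum universal semi-density matrix is a lower semicomputable semi-density matrix $\boldsymbol{\mu}$ such that for every lower semicomputable semi-density matrix $\sigma$ there is $c>0$ with $c\,\sigma(N)\leqslant\boldsymbol{\mu}(N)$ for all $N\in\mathbb{N}^+$. *)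

theory Defs
  imports Complex_Main "HOL-Library.Nat_Bijection"
begin

datatype recf =
    Zr
  | Sc
  | Pj nat
  | Cn recf "recf list"
  | Pr recf recf
  | Mn recf

inductive reval :: "recf \<Rightarrow> nat list \<Rightarrow> nat \<Rightarrow> bool" where
  zr: "reval Zr xs 0"
| sc: "reval Sc [x] (Suc x)"
| pj: "i < length xs \<Longrightarrow> reval (Pj i) xs (xs ! i)"
| cn: "list_all2 (\<lambda>g y. reval g xs y) gs ys \<Longrightarrow> reval f ys z \<Longrightarrow> reval (Cn f gs) xs z"
| pr0: "reval f xs y \<Longrightarrow> reval (Pr f g) (0 # xs) y"
| prS: "reval (Pr f g) (k # xs) y \<Longrightarrow> reval g (k # y # xs) z \<Longrightarrow> reval (Pr f g) (Suc k # xs) z"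
| mn: "reval f (x # xs) 0 \<Longrightarrow> (\<forall>y<x. \<exists>z. z > 0 \<and> reval f (y # xs) z) \<Longrightarrow> reval (Mn f) xs x"

definition total_recursive4 :: "(nat \<Rightarrow> nat \<Rightarrow> nat \<Rightarrow> nat \<Rightarrow> nat) \<Rightarrow> bool" where
  "total_recursive4 g \<longleftrightarrow> (\<exists>p. \<forall>a b c d. reval p [a, b, c, d] (g a b c d))"

definition rat_of_code :: "nat \<Rightarrow> rat" where
  "rat_of_code n = (case prod_decode n of (a, b) \<Rightarrow> Fract (int_decode a) (int b + 1))"

definition gauss_rat_of_code :: "nat \<Rightarrow> complex" where
  "gauss_rat_of_code n = (case prod_decode n of (a, b) \<Rightarrow>
      Complex (of_rat (rat_of_code a)) (of_rat (rat_of_code b)))"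

text \<open>An N x N complex matrix is represented by its entry function; only entries with
  indices below N are meaningful.\<close>
type_synonym cmat = "nat \<Rightarrow> nat \<Rightarrow> complex"

definition hermitian :: "nat \<Rightarrow> cmat \<Rightarrow> bool" where
  "hermitian N A \<longleftrightarrow> (\<forall>i<N. \<forall>j<N. A i j = cnj (A j i))"

definition psd :: "nat \<Rightarrow> cmat \<Rightarrow> bool" where
  "psd N A \<longleftrightarrow> hermitian N A \<and>
     (\<forall>v :: nat \<Rightarrow> complex. 0 \<le> Re (\<Sum>i<N. \<Sum>j<N. cnj (v i) * A i j * v j))"

definition loewner_le :: "nat \<Rightarrow> cmat \<Rightarrow> cmat \<Rightarrow> bool" where
  "loewner_le N A B \<longleftrightarrow> psd N (\<lambda>i j. B i j - A i j)"

definition mtrace :: "nat \<Rightarrow> cmat \<Rightarrow> complex" where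
  "mtrace N A = (\<Sum>i<N. A i i)"

definition Her_Q :: "nat \<Rightarrow> cmat \<Rightarrow> bool" where
  "Her_Q N A \<longleftrightarrow> hermitian N A \<and>
     (\<forall>i<N. \<forall>j<N. Re (A i j) \<in> \<rat> \<and> Im (A i j) \<in> \<rat>)"

text \<open>sigma N is the matrix in Her(N); only N \<ge> 1 is relevant.  The approximating
  total recursive function f(N,k) is given via a total recursive code function for its entries.\<close>
definition lsc_semi_density :: "(nat \<Rightarrow> cmat) \<Rightarrow> bool" where
  "lsc_semi_density \<sigma> \<longleftrightarrow>
     (\<forall>N\<ge>1. hermitian N (\<sigma> N) \<and> psd N (\<sigma> N) \<and> Re (mtrace N (\<sigma> N)) \<le> 1) \<and>
     (\<exists>f :: nat \<Rightarrow> nat \<Rightarrow> cmat.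
        (\<exists>g. total_recursive4 g \<and>
             (\<forall>N\<ge>1. \<forall>k i j. i < N \<longrightarrow> j < N \<longrightarrow> f N k i j = gauss_rat_of_code (g N k i j))) \<and>
        (\<forall>N\<ge>1. \<forall>k. Her_Q N (f N k)) \<and>
        (\<forall>N\<ge>1. \<forall>k. loewner_le N (f N k) (f N (Suc k))) \<and>
        (\<forall>N\<ge>1. \<forall>i<N. \<forall>j<N. (\<lambda>k. f N k i j) \<longlonglongrightarrow> \<sigma> N i j))"

definition quantum_universal :: "(nat \<Rightarrow> cmat) \<Rightarrow> bool" where
  "quantum_universal \<mu> \<longleftrightarrow> lsc_semi_density \<mu> \<and>
     (\<forall>\<sigma>. lsc_semi_density \<sigma> \<longrightarrow>
        (\<exists>c>0. \<forall>N\<ge>1. loewner_le N (\<lambda>i j. complex_of_real c * \<sigma> N i j) (\<mu> N)))"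

end

theory Submission
  imports Defs
begin


definition cpt :: "nat \<Rightarrow> (nat list \<Rightarrow> nat) \<Rightarrow> bool" where
  "cpt n F \<longleftrightarrow> (\<exists>p. \<forall>xs. length xs = n \<longrightarrow> reval p xs (F xs))"

lemma cpt_cong: "cpt n F \<Longrightarrow> (\<And>xs. length xs = n \<Longrightarrow> F xs = G xs) \<Longrightarrow> cpt n G"
  unfolding cpt_def by metis

lemma cpt_zero: "cpt n (\<lambda>_. 0)"
  unfolding cpt_def by (auto intro: reval.zr)

lemma cpt_proj: "i < n \<Longrightarrow> cpt n (\<lambda>xs. xs ! i)"
  unfolding cpt_def by (auto intro!: exI[of _ "Pj i"] reval.pj)

lemma choose_list: "(\<forall>i<m. \<exists>p. P i p) \<Longrightarrow> \<exists>ps. length ps = m \<and> (\<forall>i<m. P i (ps ! i))"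
  by (rule exI[of _ "map (\<lambda>i. SOME p. P i p) [0..<m]"]) (auto intro: someI_ex)

lemma cpt_compose:
  assumes "cpt m h" "length gs = m" "\<forall>g\<in>set gs. cpt n g"
  shows "cpt n (\<lambda>xs. h (map (\<lambda>g. g xs) gs))"
proof -
  obtain ph where ph: "\<forall>xs. length xs = m \<longrightarrow> reval ph xs (h xs)" using assms(1) unfolding cpt_def by blast
  have "\<forall>i<m. \<exists>p. \<forall>xs. length xs = n \<longrightarrow> reval p xs ((gs ! i) xs)"
    proof (intro allI impI)
    fix i assume "i < m"
    then have "gs ! i \<in> set gs" using assms(2) by simp
    then have "cpt n (gs ! i)" by (rule bspec[OF assms(3)])
    then show "\<exists>p. \<forall>xs. length xs = n \<longrightarrow> reval p xs ((gs ! i) xs)" unfolding cpt_def .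
  qed
  then obtain ps where ps: "length ps = m" "\<forall>i<m. \<forall>xs. length xs = n \<longrightarrow> reval (ps ! i) xs ((gs ! i) xs)"
    by (rule choose_list[THEN exE]) (rule that, blast+)
  show ?thesis unfolding cpt_def
  proof (intro exI allI impI)
    fix xs :: "nat list" assume l: "length xs = n"
    have "list_all2 (\<lambda>g y. reval g xs y) ps (map (\<lambda>g. g xs) gs)"
      using ps assms(2) l by (intro list_all2_all_nthI) auto
    moreover have "reval ph (map (\<lambda>g. g xs) gs) (h (map (\<lambda>g. g xs) gs))" using ph assms(2) by simp
    ultimately show "reval (Cn ph ps) xs (h (map (\<lambda>g. g xs) gs))" by (rule reval.cn)
  qed
qed

lemma cpt_app1: "cpt 1 (\<lambda>xs. h (xs!0)) \<Longrightarrow> cpt n A \<Longrightarrow> cpt n (\<lambda>xs. h (A xs))"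
  using cpt_compose[of 1 "\<lambda>xs. h (xs!0)" "[A]" n] by simp

lemma cpt_app2: "cpt 2 (\<lambda>xs. h (xs!0) (xs!1)) \<Longrightarrow> cpt n A \<Longrightarrow> cpt n B \<Longrightarrow> cpt n (\<lambda>xs. h (A xs) (B xs))"
  using cpt_compose[of 2 "\<lambda>xs. h (xs!0) (xs!1)" "[A,B]" n] by simp

lemma cpt_app3: "cpt 3 (\<lambda>xs. h (xs!0) (xs!1) (xs!2)) \<Longrightarrow> cpt n A \<Longrightarrow> cpt n B \<Longrightarrow> cpt n C \<Longrightarrow>
   cpt n (\<lambda>xs. h (A xs) (B xs) (C xs))"
  using cpt_compose[of 3 "\<lambda>xs. h (xs!0) (xs!1) (xs!2)" "[A,B,C]" n] by simp

lemma cpt_app4: "cpt 4 (\<lambda>xs. h (xs!0) (xs!1) (xs!2) (xs!3)) \<Longrightarrow> cpt n A \<Longrightarrow> cpt n B \<Longrightarrow> cpt n C \<Longrightarrow> cpt n E \<Longrightarrow>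
   cpt n (\<lambda>xs. h (A xs) (B xs) (C xs) (E xs))"
  using cpt_compose[of 4 "\<lambda>xs. h (xs!0) (xs!1) (xs!2) (xs!3)" "[A,B,C,E]" n] by (simp add: numeral_eq_Suc)

lemma cpt_Suc1: "cpt 1 (\<lambda>xs. Suc (xs!0))"
  unfolding cpt_def
  by (rule exI[of _ Sc]) (auto simp: length_Suc_conv intro: reval.sc)

lemma cpt_Suc: "cpt n A \<Longrightarrow> cpt n (\<lambda>xs. Suc (A xs))"
  by (rule cpt_app1[OF cpt_Suc1])

lemma cpt_const: "cpt n (\<lambda>_. c)"
  by (induction c) (auto intro: cpt_zero cpt_Suc)

lemma cpt_pr:
  assumes "cpt n f" "cpt (Suc (Suc n)) g"
  shows "cpt (Suc n) (\<lambda>xs. rec_nat (f (tl xs)) (\<lambda>k y. g (k # y # tl xs)) (hd xs))"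
proof -
  obtain pf where pf: "\<And>xs. length xs = n \<Longrightarrow> reval pf xs (f xs)" using assms(1) unfolding cpt_def by blast
  obtain pg where pg: "\<And>xs. length xs = Suc (Suc n) \<Longrightarrow> reval pg xs (g xs)" using assms(2) unfolding cpt_def by blast
  have *: "reval (Pr pf pg) (k # xs) (rec_nat (f xs) (\<lambda>k y. g (k # y # xs)) k)" if l: "length xs = n" for k xs
  proof (induction k)
    case 0 show ?case using pf[OF l] by (simp add: reval.pr0)
  next
    case (Suc k)
    have "reval pg (k # rec_nat (f xs) (\<lambda>k y. g (k # y # xs)) k # xs) (g (k # rec_nat (f xs) (\<lambda>k y. g (k # y # xs)) k # xs))"
      by (rule pg) (simp add: l)
    from reval.prS[OF Suc this] show ?case by simp
  qed
  show ?thesis unfolding cpt_def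
  proof (intro exI allI impI)
    fix xs :: "nat list" assume "length xs = Suc n"
    then obtain k ys where "xs = k # ys" "length ys = n" by (cases xs) auto
    then show "reval (Pr pf pg) xs (rec_nat (f (tl xs)) (\<lambda>k y. g (k # y # tl xs)) (hd xs))" using * by simp
  qed
qed

lemma cpt_mn:
  assumes "cpt (Suc n) f" "\<And>xs. length xs = n \<Longrightarrow> \<exists>y. f (y # xs) = 0"
  shows "cpt n (\<lambda>xs. LEAST y. f (y # xs) = 0)"
proof -
  obtain pf where pf: "\<forall>xs. length xs = Suc n \<longrightarrow> reval pf xs (f xs)" using assms(1) unfolding cpt_def by blast
  show ?thesis unfolding cpt_def
  proof (intro exI allI impI)
    fix xs :: "nat list" assume l: "length xs = n"
    let ?x = "LEAST y. f (y # xs) = 0"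
    have "f (?x # xs) = 0" using assms(2)[OF l] by (rule LeastI_ex)
    then have a: "reval pf (?x # xs) 0" using pf l by (metis length_Cons)
    have b: "\<forall>y<?x. \<exists>z. z > 0 \<and> reval pf (y # xs) z"
      proof (intro allI impI)
      fix y assume "y < ?x"
      then have "f (y # xs) \<noteq> 0" by (rule not_less_Least)
      then show "\<exists>z. z > 0 \<and> reval pf (y # xs) z" using pf l by auto
    qed
    show "reval (Mn pf) xs ?x" using a b by (rule reval.mn)
  qed
qed

lemma hd_len: "length xs = Suc n \<Longrightarrow> hd xs = xs ! 0" by (cases xs) auto
lemma tl_len: "length xs = Suc n \<Longrightarrow> i < n \<Longrightarrow> tl xs ! i = xs ! Suc i" by (cases xs) auto

lemma rec_Suc_eq: "rec_nat a (\<lambda>k y. Suc y) m = m + a" by (induction m) auto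
lemma rec_add_eq: "rec_nat 0 (\<lambda>k y. y + b) m = m * (b::nat)" by (induction m) auto
lemma rec_pred_eq: "rec_nat 0 (\<lambda>k y. k) m = m - (1::nat)" by (induction m) auto
lemma rec_sub_eq: "rec_nat b (\<lambda>k y. y - Suc 0) m = b - (m::nat)" by (induction m) auto

lemma cpt_add2: "cpt 2 (\<lambda>xs. xs!0 + xs!1)"
proof -
  have "cpt (Suc (Suc 0)) (\<lambda>xs. rec_nat ((tl xs)!0) (\<lambda>k y. (\<lambda>zs. Suc (zs!1)) (k # y # tl xs)) (hd xs))"
    by (rule cpt_pr[of "Suc 0" "\<lambda>xs. xs!0" "\<lambda>zs. Suc (zs!1)"]) (auto intro!: cpt_proj cpt_Suc)
  then show ?thesis unfolding numeral_2_eq_2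
    by (rule cpt_cong) (auto simp: rec_Suc_eq hd_len tl_len)
qed

lemma cpt_add: "cpt n A \<Longrightarrow> cpt n B \<Longrightarrow> cpt n (\<lambda>xs. A xs + B xs)"
  by (rule cpt_app2[of "(+)", OF cpt_add2])

lemma cpt_mult2: "cpt 2 (\<lambda>xs. xs!0 * xs!1)"
proof -
  have "cpt (Suc (Suc 0)) (\<lambda>xs. rec_nat ((\<lambda>_. 0) (tl xs)) (\<lambda>k y. (\<lambda>zs. zs!1 + zs!2) (k # y # tl xs)) (hd xs))"
    by (rule cpt_pr[of "Suc 0" "\<lambda>_. 0" "\<lambda>zs. zs!1 + zs!2"]) (auto intro!: cpt_proj cpt_add cpt_zero)
  then show ?thesis unfolding numeral_2_eq_2
    by (rule cpt_cong) (auto simp: rec_add_eq hd_len tl_len)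
qed

lemma cpt_mult: "cpt n A \<Longrightarrow> cpt n B \<Longrightarrow> cpt n (\<lambda>xs. A xs * B xs)"
  by (rule cpt_app2[of "(*)", OF cpt_mult2])

lemma cpt_pred1: "cpt 1 (\<lambda>xs. xs!0 - 1)"
proof -
  have "cpt (Suc 0) (\<lambda>xs. rec_nat ((\<lambda>_. 0) (tl xs)) (\<lambda>k y. (\<lambda>zs. zs!0) (k # y # tl xs)) (hd xs))"
    by (rule cpt_pr[of 0 "\<lambda>_. 0" "\<lambda>zs. zs!0"]) (auto intro!: cpt_proj cpt_zero)
  then show ?thesis unfolding One_nat_def
    by (rule cpt_cong) (auto simp: rec_pred_eq hd_len tl_len)
qed

lemma cpt_pred: "cpt n A \<Longrightarrow> cpt n (\<lambda>xs. A xs - 1)"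
  by (rule cpt_app1[of "\<lambda>a. a - 1", OF cpt_pred1])

lemma cpt_sub2': "cpt 2 (\<lambda>xs. xs!1 - xs!0)"
proof -
  have "cpt (Suc (Suc 0)) (\<lambda>xs. rec_nat ((tl xs)!0) (\<lambda>k y. (\<lambda>zs. zs!1 - 1) (k # y # tl xs)) (hd xs))"
    by (rule cpt_pr[of "Suc 0" "\<lambda>xs. xs!0" "\<lambda>zs. zs!1 - 1"]) (intro cpt_pred cpt_proj, simp)+
  then show ?thesis unfolding numeral_2_eq_2
    by (rule cpt_cong) (auto simp: rec_sub_eq hd_len tl_len)
qed

lemma cpt_sub: "cpt n A \<Longrightarrow> cpt n B \<Longrightarrow> cpt n (\<lambda>xs. A xs - B xs)"
  using cpt_app2[of "\<lambda>a b. b - a", OF cpt_sub2', of n B A] by simp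

definition cptP :: "nat \<Rightarrow> (nat list \<Rightarrow> bool) \<Rightarrow> bool" where
  "cptP n P \<longleftrightarrow> cpt n (\<lambda>xs. if P xs then 1 else 0)"

lemma cpt_if: "cptP n P \<Longrightarrow> cpt n A \<Longrightarrow> cpt n B \<Longrightarrow> cpt n (\<lambda>xs. if P xs then A xs else B xs)"
  unfolding cptP_def
proof -
  assume p: "cpt n (\<lambda>xs. if P xs then 1 else 0)" and a: "cpt n A" and b: "cpt n B"
  have "cpt n (\<lambda>xs. (if P xs then 1 else 0) * A xs + (1 - (if P xs then 1 else 0)) * B xs)"
    by (rule cpt_add[OF cpt_mult[OF p a] cpt_mult[OF cpt_sub[OF cpt_const p] b]])
  then show ?thesis by (rule cpt_cong) auto
qed

lemma cptP_eq0: "cpt n A \<Longrightarrow> cptP n (\<lambda>xs. A xs = 0)"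
  unfolding cptP_def
  by (rule cpt_cong[OF cpt_sub[OF cpt_const cpt_sub[OF _ cpt_pred]]]) auto

lemma cptP_le: "cpt n A \<Longrightarrow> cpt n B \<Longrightarrow> cptP n (\<lambda>xs. A xs \<le> B xs)"
  by (drule (1) cpt_sub, drule cptP_eq0) simp

lemma cptP_less: "cpt n A \<Longrightarrow> cpt n B \<Longrightarrow> cptP n (\<lambda>xs. A xs < B xs)"
  by (drule cpt_Suc, drule (1) cptP_le) (simp add: Suc_le_eq)

lemma cptP_not: "cptP n P \<Longrightarrow> cptP n (\<lambda>xs. \<not> P xs)"
  unfolding cptP_def by (rule cpt_cong[OF cpt_sub[OF cpt_const]]) auto

lemma cptP_and: "cptP n P \<Longrightarrow> cptP n Q \<Longrightarrow> cptP n (\<lambda>xs. P xs \<and> Q xs)"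
  unfolding cptP_def by (erule cpt_cong[OF cpt_mult], assumption) auto

lemma cptP_or: "cptP n P \<Longrightarrow> cptP n Q \<Longrightarrow> cptP n (\<lambda>xs. P xs \<or> Q xs)"
  by (drule cptP_not, drule cptP_not, drule (1) cptP_and, drule cptP_not) simp

lemma cptP_imp: "cptP n P \<Longrightarrow> cptP n Q \<Longrightarrow> cptP n (\<lambda>xs. P xs \<longrightarrow> Q xs)"
  by (drule cptP_not, drule (1) cptP_or) simp

lemma cptP_eq: "cpt n A \<Longrightarrow> cpt n B \<Longrightarrow> cptP n (\<lambda>xs. A xs = B xs)"
proof -
  assume a: "cpt n A" "cpt n B"
  have "cptP n (\<lambda>xs. A xs \<le> B xs \<and> B xs \<le> A xs)" using a by (intro cptP_and cptP_le)
  then show ?thesis by (simp add: order_eq_iff[symmetric])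
qed

lemma cpt_least:
  assumes "cptP (Suc n) R" "\<And>xs. length xs = n \<Longrightarrow> \<exists>y. R (y # xs)"
  shows "cpt n (\<lambda>xs. LEAST y. R (y # xs))"
proof -
  have c: "cpt (Suc n) (\<lambda>ys. if \<not> R ys then 1 else 0)"
    using assms(1)[THEN cptP_not] unfolding cptP_def .
  have e: "\<exists>y. (\<lambda>ys. if \<not> R ys then 1 else (0::nat)) (y # xs) = 0" if "length xs = n" for xs
    using assms(2)[OF that] by auto
  have "cpt n (\<lambda>xs. LEAST y. (\<lambda>ys. if \<not> R ys then 1 else (0::nat)) (y # xs) = 0)"
    by (rule cpt_mn[OF c e])
  moreover have "(\<lambda>y. (if \<not> R (y # xs) then 1 else (0::nat)) = 0) = (\<lambda>y. R (y # xs))" for xs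
    by auto
  ultimately show ?thesis by simp
qed

lemma div_least: "(LEAST q. a < Suc q * Suc b) = a div Suc b"
proof (rule Least_equality)
  show "a < Suc (a div Suc b) * Suc b"
    by (metis add.commute div_mult_mod_eq mod_less_divisor mult_Suc nat_add_left_cancel_less zero_less_Suc)
  fix q assume "a < Suc q * Suc b"
  then show "a div Suc b \<le> q"
    by (metis less_Suc_eq_le less_mult_imp_div_less)
qed

lemma cpt_div2: "cpt 2 (\<lambda>xs. xs!0 div Suc (xs!1))"
proof -
  have "cpt 2 (\<lambda>xs. LEAST q. (\<lambda>ys. ys!1 < Suc (ys!0) * Suc (ys!2)) (q # xs))"
  proof (rule cpt_least[of 2 "\<lambda>ys. ys!1 < Suc (ys!0) * Suc (ys!2)"])
    show "cptP (Suc 2) (\<lambda>ys. ys!1 < Suc (ys!0) * Suc (ys!2))"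
      by (intro cptP_less cpt_mult cpt_Suc cpt_proj) simp_all
    fix xs :: "nat list"
    show "\<exists>y. (y # xs) ! 1 < Suc ((y # xs) ! 0) * Suc ((y # xs) ! 2)"
      by (rule exI[of _ "xs!0"]) simp
  qed
  then show ?thesis
    by (rule cpt_cong) (simp only: div_least nth_Cons_0 nth_Cons_Suc numeral_2_eq_2 One_nat_def)
qed

lemma cpt_div: "cpt n A \<Longrightarrow> cpt n B \<Longrightarrow> cpt n (\<lambda>xs. A xs div Suc (B xs))"
  by (rule cpt_app2[of "\<lambda>a b. a div Suc b", OF cpt_div2])

lemma cpt_div2c: "cpt n A \<Longrightarrow> cpt n (\<lambda>xs. A xs div 2)"
  using cpt_div[of n A "\<lambda>_. 1", OF _ cpt_const] by (simp add: numeral_2_eq_2)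

lemma cptP_even: "cpt n A \<Longrightarrow> cptP n (\<lambda>xs. even (A xs))"
proof -
  assume "cpt n A"
  then have "cptP n (\<lambda>xs. A xs = 2 * (A xs div 2))"
    by (intro cptP_eq cpt_mult cpt_const cpt_div2c)
  moreover have "\<And>a::nat. (a = 2 * (a div 2)) \<longleftrightarrow> even a" by presburger
  ultimately show ?thesis by simp
qed

lemma cpt_tri: "cpt n A \<Longrightarrow> cpt n (\<lambda>xs. triangle (A xs))"
  unfolding triangle_def by (intro cpt_div2c cpt_mult cpt_Suc; assumption)


lemma le_triangle: "m \<le> triangle m" by (induction m) auto

lemma prod_decode_least:
  "prod_decode n = (n - triangle (LEAST s. n < triangle (Suc s)),
     (LEAST s. n < triangle (Suc s)) - (n - triangle (LEAST s. n < triangle (Suc s))))"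
proof -
  define s where "s = (LEAST s. n < triangle (Suc s))"
  have ex: "\<exists>s. n < triangle (Suc s)"
  proof
    have "n \<le> triangle n" by (induction n) auto
    then show "n < triangle (Suc n)" by simp
  qed
  have u: "n < triangle (Suc s)" unfolding s_def using ex by (rule LeastI_ex)
  have l: "triangle s \<le> n"
  proof (cases s)
    case 0 then show ?thesis by simp
  next
    case (Suc t)
    then have "t < s" by simp
    then have "\<not> n < triangle (Suc t)" unfolding s_def by (rule not_less_Least)
    then show ?thesis using Suc by simp
  qed
  define a where "a = n - triangle s"
  have "a \<le> s" using u l unfolding a_def by simp
  then have "prod_encode (a, s - a) = n" using l unfolding a_def prod_encode_def by simp
  then have "prod_decode n = (a, s - a)" by (metis prod_encode_inverse)
  then show ?thesis unfolding a_def s_def .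
qed

lemma cpt_tri_least: "cpt 1 (\<lambda>xs. LEAST s. xs!0 < triangle (Suc s))"
proof -
  have "cpt 1 (\<lambda>xs. LEAST y. (y # xs)!1 < triangle (Suc ((y # xs)!0)))"
  proof (rule cpt_least[of 1 "\<lambda>ys. ys!1 < triangle (Suc (ys!0))"])
    show "cptP (Suc 1) (\<lambda>ys. ys!1 < triangle (Suc (ys!0)))"
      by (intro cptP_less cpt_tri cpt_Suc cpt_proj) simp_all
    fix xs :: "nat list"
    have "xs!0 \<le> triangle (xs!0)" by (rule le_triangle)
    then show "\<exists>y. (y # xs) ! 1 < triangle (Suc ((y # xs) ! 0))"
      by (intro exI[of _ "xs!0"]) simp
  qed
  then show ?thesis by simp
qed

lemma cpt_fst1: "cpt 1 (\<lambda>xs. fst (prod_decode (xs!0)))"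
proof -
  have "cpt 1 (\<lambda>xs. xs!0 - triangle (LEAST s. xs!0 < triangle (Suc s)))"
    by (intro cpt_sub cpt_tri cpt_proj cpt_tri_least) simp
  then show ?thesis by (rule cpt_cong) (subst prod_decode_least, simp)
qed

lemma cpt_snd1: "cpt 1 (\<lambda>xs. snd (prod_decode (xs!0)))"
proof -
  have "cpt 1 (\<lambda>xs. (LEAST s. xs!0 < triangle (Suc s)) - (xs!0 - triangle (LEAST s. xs!0 < triangle (Suc s))))"
    by (intro cpt_sub cpt_tri cpt_proj cpt_tri_least) simp
  then show ?thesis by (rule cpt_cong) (subst prod_decode_least, simp)
qed

lemma cpt_fst: "cpt n A \<Longrightarrow> cpt n (\<lambda>xs. fst (prod_decode (A xs)))"
  by (rule cpt_app1[of "\<lambda>a. fst (prod_decode a)", OF cpt_fst1])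

lemma cpt_snd: "cpt n A \<Longrightarrow> cpt n (\<lambda>xs. snd (prod_decode (A xs)))"
  by (rule cpt_app1[of "\<lambda>a. snd (prod_decode a)", OF cpt_snd1])

lemma len4: "length xs = 4 \<Longrightarrow> xs = [xs!0, xs!1, xs!2, xs!3]"
  by (rule nth_equalityI) (auto simp: less_Suc_eq numeral_eq_Suc)

lemma cpt_g4: "total_recursive4 g \<Longrightarrow> cpt 4 (\<lambda>xs. g (xs!0) (xs!1) (xs!2) (xs!3))"
  unfolding total_recursive4_def cpt_def
proof (elim exE, intro exI allI impI)
  fix p xs assume "\<forall>a b c d. reval p [a, b, c, d] (g a b c d)" "length (xs::nat list) = 4"
  then show "reval p xs (g (xs!0) (xs!1) (xs!2) (xs!3))" using len4 by metis
qed

lemma cpt_g: "total_recursive4 g \<Longrightarrow> cpt n A \<Longrightarrow> cpt n B \<Longrightarrow> cpt n C \<Longrightarrow> cpt n E \<Longrightarrow>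
   cpt n (\<lambda>xs. g (A xs) (B xs) (C xs) (E xs))"
  by (rule cpt_app4[of g, OF cpt_g4])

lemma rec_sum: "rec_nat 0 (\<lambda>k y. y + Q k) m = (\<Sum>i<m. Q i :: nat)"
  by (induction m) auto

lemma map_drop2: "length zs = Suc (Suc n) \<Longrightarrow> map (\<lambda>j. zs ! Suc (Suc j)) [0..<n] = drop 2 zs"
  by (rule nth_equalityI) auto

lemma cpt_shift: "cpt (Suc n) P \<Longrightarrow> cpt (Suc (Suc n)) (\<lambda>zs. P (zs!0 # drop 2 zs))"
proof -
  assume a: "cpt (Suc n) P"
  have "cpt (Suc (Suc n)) (\<lambda>zs. P (map (\<lambda>g. g zs) ((\<lambda>zs. zs!0) # map (\<lambda>j zs. zs!(j+2)) [0..<n])))"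
    by (rule cpt_compose[OF a]) (auto intro!: cpt_proj)
  then show ?thesis by (rule cpt_cong) (simp add: map_drop2 comp_def)
qed

lemma cpt_sum0: "cpt (Suc n) P \<Longrightarrow> cpt (Suc n) (\<lambda>xs. \<Sum>i<hd xs. P (i # tl xs))"
proof -
  assume a: "cpt (Suc n) P"
  have "cpt (Suc n) (\<lambda>xs. rec_nat ((\<lambda>_. 0) (tl xs)) (\<lambda>k y. (\<lambda>zs. zs!1 + P (zs!0 # drop 2 zs)) (k # y # tl xs)) (hd xs))"
    by (rule cpt_pr[OF cpt_zero cpt_add[OF cpt_proj cpt_shift[OF a]]]) simp
  then show ?thesis by (rule cpt_cong) (simp add: rec_sum add.commute)
qed

lemma map_nth_upt: "length xs = n \<Longrightarrow> map (\<lambda>j. xs ! j) [0..<n] = xs"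
  by (rule nth_equalityI) auto

lemma cpt_sum: "cpt n M \<Longrightarrow> cpt (Suc n) P \<Longrightarrow> cpt n (\<lambda>xs. \<Sum>i<M xs. P (i # xs))"
proof -
  assume m: "cpt n M" and a: "cpt (Suc n) P"
  have "cpt n (\<lambda>xs. (\<lambda>xs. \<Sum>i<hd xs. P (i # tl xs)) (map (\<lambda>g. g xs) (M # map (\<lambda>j xs. xs!j) [0..<n])))"
    by (rule cpt_compose[OF cpt_sum0[OF a]]) (auto intro!: cpt_proj m)
  then show ?thesis by (rule cpt_cong) (simp add: map_nth_upt comp_def)
qed



definition acode :: "(nat \<Rightarrow> nat \<Rightarrow> nat \<Rightarrow> nat \<Rightarrow> nat) \<Rightarrow> nat \<Rightarrow> nat \<Rightarrow> nat \<Rightarrow> nat" where "acode g N k i = fst (prod_decode (fst (prod_decode (g N k i i))))"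
definition bcode :: "(nat \<Rightarrow> nat \<Rightarrow> nat \<Rightarrow> nat \<Rightarrow> nat) \<Rightarrow> nat \<Rightarrow> nat \<Rightarrow> nat \<Rightarrow> nat" where "bcode g N k i = snd (prod_decode (fst (prod_decode (g N k i i))))"
definition posf :: "(nat \<Rightarrow> nat \<Rightarrow> nat \<Rightarrow> nat \<Rightarrow> nat) \<Rightarrow> nat \<Rightarrow> nat \<Rightarrow> nat \<Rightarrow> nat" where "posf g N k i = (if even (acode g N k i) then (N*N*(acode g N k i div 2)) div Suc (bcode g N k i) else 0)"
definition negf :: "(nat \<Rightarrow> nat \<Rightarrow> nat \<Rightarrow> nat \<Rightarrow> nat) \<Rightarrow> nat \<Rightarrow> nat \<Rightarrow> nat \<Rightarrow> nat" where "negf g N k i = (if even (acode g N k i) then 0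
   else (N*N*(acode g N k i div 2 + 1) + bcode g N k i) div Suc (bcode g N k i))"
definition Qf :: "(nat \<Rightarrow> nat \<Rightarrow> nat \<Rightarrow> nat \<Rightarrow> nat) \<Rightarrow> nat \<Rightarrow> nat \<Rightarrow> bool" where "Qf g N k \<longleftrightarrow> N*N + (\<Sum>i<N. negf g N k i) \<le> (\<Sum>i<N. posf g N k i) + 2*N"
definition Kf :: "(nat \<Rightarrow> nat \<Rightarrow> nat \<Rightarrow> nat \<Rightarrow> nat) \<Rightarrow> nat \<Rightarrow> nat \<Rightarrow> nat" where "Kf g N k = (LEAST y. y \<le> k \<longrightarrow> Qf g N y)"
definition i0f :: "(nat \<Rightarrow> nat \<Rightarrow> nat \<Rightarrow> nat \<Rightarrow> nat) \<Rightarrow> nat \<Rightarrow> nat \<Rightarrow> nat" where "i0f g N k = (LEAST i. N \<le> i \<or> posf g N k i \<le> N)"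
definition onecode :: nat where "onecode = prod_encode (prod_encode (int_encode 1, 0), 0)"
definition sigc :: "(nat \<Rightarrow> nat \<Rightarrow> nat \<Rightarrow> nat \<Rightarrow> nat) \<Rightarrow> nat \<Rightarrow> nat \<Rightarrow> nat \<Rightarrow> nat \<Rightarrow> nat" where "sigc g N k i j = (if Kf g N k \<le> k \<and> i = j \<and> i = i0f g N (Kf g N k) then onecode else 0)"

context
  fixes g assumes tr: "total_recursive4 g"
begin

lemma cpt_posf3: "cpt 3 (\<lambda>xs. posf g (xs!0) (xs!1) (xs!2))"
  unfolding posf_def acode_def bcode_def
  by (intro cpt_if cptP_even cpt_div cpt_mult cpt_fst cpt_snd cpt_g[OF tr] cpt_proj cpt_div2c cpt_const) simp_all

lemma cpt_negf3: "cpt 3 (\<lambda>xs. negf g (xs!0) (xs!1) (xs!2))"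
  unfolding negf_def acode_def bcode_def
  by (intro cpt_if cptP_even cpt_div cpt_add cpt_mult cpt_fst cpt_snd cpt_g[OF tr] cpt_proj cpt_div2c cpt_const) simp_all

lemma cpt_posf: "cpt n A \<Longrightarrow> cpt n B \<Longrightarrow> cpt n C \<Longrightarrow> cpt n (\<lambda>xs. posf g (A xs) (B xs) (C xs))"
  by (rule cpt_app3[of "posf g", OF cpt_posf3])

lemma cpt_negf: "cpt n A \<Longrightarrow> cpt n B \<Longrightarrow> cpt n C \<Longrightarrow> cpt n (\<lambda>xs. negf g (A xs) (B xs) (C xs))"
  by (rule cpt_app3[of "negf g", OF cpt_negf3])

lemma cpt_Qf2: "cptP 2 (\<lambda>xs. Qf g (xs!0) (xs!1))"
proof -
  have s1: "cpt 2 (\<lambda>xs. \<Sum>i<xs!0. (\<lambda>ys. posf g (ys!1) (ys!2) (ys!0)) (i # xs))"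
    by (rule cpt_sum) (intro cpt_posf cpt_proj; simp)+
  have s2: "cpt 2 (\<lambda>xs. \<Sum>i<xs!0. (\<lambda>ys. negf g (ys!1) (ys!2) (ys!0)) (i # xs))"
    by (rule cpt_sum) (intro cpt_negf cpt_proj; simp)+
  have "cptP 2 (\<lambda>xs. xs!0 * xs!0 + (\<Sum>i<xs!0. (\<lambda>ys. negf g (ys!1) (ys!2) (ys!0)) (i # xs))
      \<le> (\<Sum>i<xs!0. (\<lambda>ys. posf g (ys!1) (ys!2) (ys!0)) (i # xs)) + 2 * xs!0)"
    by (intro cptP_le cpt_add cpt_mult cpt_proj cpt_const s1 s2) simp_all
  then show ?thesis unfolding Qf_def by simp
qed

lemma cpt_Qf: "cpt n A \<Longrightarrow> cpt n B \<Longrightarrow> cptP n (\<lambda>xs. Qf g (A xs) (B xs))"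
  unfolding cptP_def by (rule cpt_app2[of "\<lambda>a b. if Qf g a b then 1 else 0", OF cpt_Qf2[unfolded cptP_def]])

lemma cpt_Kf2: "cpt 2 (\<lambda>xs. Kf g (xs!0) (xs!1))"
proof -
  have "cpt 2 (\<lambda>xs. LEAST y. (\<lambda>ys. ys!0 \<le> ys!2 \<longrightarrow> Qf g (ys!1) (ys!0)) (y # xs))"
  proof (rule cpt_least)
    show "cptP (Suc 2) (\<lambda>ys. ys!0 \<le> ys!2 \<longrightarrow> Qf g (ys!1) (ys!0))"
      by (intro cptP_imp cptP_le cpt_Qf cpt_proj) simp_all
    fix xs :: "nat list"
    show "\<exists>y. (\<lambda>ys. ys!0 \<le> ys!2 \<longrightarrow> Qf g (ys!1) (ys!0)) (y # xs)"
      by (rule exI[of _ "Suc (xs!1)"]) simp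
  qed
  then show ?thesis unfolding Kf_def by simp
qed

lemma cpt_Kf: "cpt n A \<Longrightarrow> cpt n B \<Longrightarrow> cpt n (\<lambda>xs. Kf g (A xs) (B xs))"
  by (rule cpt_app2[of "Kf g", OF cpt_Kf2])

lemma cpt_i0f2: "cpt 2 (\<lambda>xs. i0f g (xs!0) (xs!1))"
proof -
  have "cpt 2 (\<lambda>xs. LEAST y. (\<lambda>ys. ys!1 \<le> ys!0 \<or> posf g (ys!1) (ys!2) (ys!0) \<le> ys!1) (y # xs))"
  proof (rule cpt_least)
    show "cptP (Suc 2) (\<lambda>ys. ys!1 \<le> ys!0 \<or> posf g (ys!1) (ys!2) (ys!0) \<le> ys!1)"
      by (intro cptP_or cptP_le cpt_posf cpt_proj) simp_all
    fix xs :: "nat list"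
    show "\<exists>y. (\<lambda>ys. ys!1 \<le> ys!0 \<or> posf g (ys!1) (ys!2) (ys!0) \<le> ys!1) (y # xs)"
      by (rule exI[of _ "xs!0"]) simp
  qed
  then show ?thesis unfolding i0f_def by simp
qed

lemma cpt_i0f: "cpt n A \<Longrightarrow> cpt n B \<Longrightarrow> cpt n (\<lambda>xs. i0f g (A xs) (B xs))"
  by (rule cpt_app2[of "i0f g", OF cpt_i0f2])

lemma cpt_sigc4: "cpt 4 (\<lambda>xs. sigc g (xs!0) (xs!1) (xs!2) (xs!3))"
  unfolding sigc_def
  by (intro cpt_if cptP_and cptP_le cptP_eq cpt_Kf cpt_i0f cpt_proj cpt_const) simp_all

lemma tr_sigc: "total_recursive4 (sigc g)"
proof -
  obtain p where p: "\<And>xs. length xs = 4 \<Longrightarrow> reval p xs (sigc g (xs!0) (xs!1) (xs!2) (xs!3))"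
    using cpt_sigc4 unfolding cpt_def by blast
  show ?thesis unfolding total_recursive4_def
  proof (intro exI allI)
    fix a b c d
    show "reval p [a, b, c, d] (sigc g a b c d)" using p[of "[a,b,c,d]"] by simp
  qed
qed

end


definition unitm :: "nat \<Rightarrow> cmat" where "unitm a = (\<lambda>i j. if i = j \<and> i = a then 1 else 0)"

lemma quad_unitm: "(\<Sum>i<N. \<Sum>j<N. cnj (v i) * unitm a i j * v j) = (if a < N then cnj (v a) * v a else 0)"
proof -
  have e: "cnj (v i) * unitm a i j * v j = (if j = i then (if i = a then cnj (v a) * v a else 0) else 0)" for i j
    by (simp add: unitm_def)
  show ?thesis unfolding e by (simp add: sum.delta sum.delta')
qed

lemma quad_unitvec: "(a::nat) < N \<Longrightarrow> (\<Sum>i<N. \<Sum>j<N. cnj (if i = a then 1 else 0) * A i j * (if j = a then 1 else 0)) = A a a"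
proof -
  have e: "cnj (if i = a then 1 else 0) * A i j * (if j = a then 1 else 0) = (if j = a then (if i = a then A a a else 0) else 0)" for i j
    by simp
  assume "a < N"
  then have d: "(\<Sum>j<N. if j = a then Y else 0) = Y" for Y :: complex by simp
  show ?thesis unfolding e d ..
qed

lemma psd_diag: "psd N A \<Longrightarrow> a < N \<Longrightarrow> 0 \<le> Re (A a a)"
proof -
  assume "psd N A" "a < N"
  then have "\<forall>v. 0 \<le> Re (\<Sum>i<N. \<Sum>j<N. cnj (v i) * A i j * v j)"
    unfolding psd_def by blast
  then have "0 \<le> Re (\<Sum>i<N. \<Sum>j<N. cnj (if i = a then 1 else 0) * A i j * (if j = a then 1 else 0))"
    by (rule spec[of _ "\<lambda>i. if i = a then 1 else 0", THEN back_subst]) simp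
  then show ?thesis using quad_unitvec[OF \<open>a < N\<close>, of A] by simp
qed

lemma psd_unitm: "psd N (unitm a)"
  unfolding psd_def hermitian_def
proof (intro conjI allI impI)
  fix v :: "nat \<Rightarrow> complex"
  show "0 \<le> Re (\<Sum>i<N. \<Sum>j<N. cnj (v i) * unitm a i j * v j)"
    unfolding quad_unitm by (simp add: complex_mult_cnj)
qed (auto simp: unitm_def)

lemma psd_zero: "psd N (\<lambda>i j. 0)"
  unfolding psd_def hermitian_def by simp

lemma trace_unitm: "Re (mtrace N (unitm a)) \<le> 1"
  unfolding mtrace_def unitm_def by (simp add: sum.delta sum.delta')

lemma gauss0: "gauss_rat_of_code 0 = 0"
proof -
  have "prod_decode 0 = (0, 0)" using prod_encode_inverse[of "(0,0)"] by (simp add: prod_encode_def)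
  then show ?thesis unfolding gauss_rat_of_code_def rat_of_code_def by (simp add: int_decode_def sum_decode_def complex_eq_iff Fract_of_int_quotient)
qed

lemma gauss1: "gauss_rat_of_code onecode = 1"
proof -
  have p0: "prod_decode 0 = (0, 0)" using prod_encode_inverse[of "(0,0)"] by (simp add: prod_encode_def)
  have "int_decode (int_encode 1) = 1" by simp
  then show ?thesis unfolding gauss_rat_of_code_def rat_of_code_def onecode_def
    by (simp add: p0 complex_eq_iff Fract_of_int_quotient int_decode_def sum_decode_def)
qed

lemma int_decode_eq: "int_decode a = (if even a then int (a div 2) else - int (a div 2) - 1)"
  unfolding int_decode_def sum_decode_def by simp

lemma Re_gauss: "Re (gauss_rat_of_code c) =
   real_of_int (int_decode (fst (prod_decode (fst (prod_decode c))))) / real (Suc (snd (prod_decode (fst (prod_decode c)))))"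
  unfolding gauss_rat_of_code_def rat_of_code_def
  by (simp add: case_prod_beta Fract_of_int_quotient of_rat_divide of_rat_add)



lemma L1: "real (p div Suc b) * real (Suc b) \<le> real p"
proof -
  have "p div Suc b * Suc b \<le> p" by (rule div_times_less_eq_dividend)
  then show ?thesis by (metis of_nat_le_iff of_nat_mult)
qed

lemma L2: "real p < (real (p div Suc b) + 1) * real (Suc b)"
proof -
  have "p < (p div Suc b + 1) * Suc b"
    by (metis add.commute div_mult_mod_eq mod_less_divisor mult_Suc nat_add_left_cancel_less zero_less_Suc Suc_eq_plus1)
  then show ?thesis by (metis of_nat_less_iff of_nat_mult of_nat_add of_nat_1)
qed

lemma L3: "real p \<le> real ((p + b) div Suc b) * real (Suc b)"
proof -
  have "p + b < ((p + b) div Suc b + 1) * Suc b"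
    by (metis add.commute div_mult_mod_eq mod_less_divisor mult_Suc nat_add_left_cancel_less zero_less_Suc Suc_eq_plus1)
  then have "p \<le> (p + b) div Suc b * Suc b" by simp
  then show ?thesis by (metis of_nat_le_iff of_nat_mult)
qed

lemma L4: "real ((p + b) div Suc b) * real (Suc b) < real p + real (Suc b)"
proof -
  have "(p + b) div Suc b * Suc b \<le> p + b" by (rule div_times_less_eq_dividend)
  then have "(p + b) div Suc b * Suc b < p + Suc b" by simp
  then show ?thesis by (metis of_nat_less_iff of_nat_mult of_nat_add)
qed

context fixes g :: "nat \<Rightarrow> nat \<Rightarrow> nat \<Rightarrow> nat \<Rightarrow> nat" and N k i :: nat
begin

definition "xv = Re (gauss_rat_of_code (g N k i i))"

lemma xv_eq: "xv = real_of_int (int_decode (acode g N k i)) / real (Suc (bcode g N k i))"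
  unfolding xv_def Re_gauss acode_def bcode_def ..

lemma code_bounds:
  "real (posf g N k i) - real (negf g N k i) \<le> real (N*N) * xv"
  "real (N*N) * xv - 1 < real (posf g N k i) - real (negf g N k i)"
  "real (N*N) * xv < real (posf g N k i) + 1"
  "real (posf g N k i) \<le> max 0 (real (N*N) * xv)"
proof -
  define a where "a = acode g N k i"
  define b where "b = bcode g N k i"
  define m where "m = a div 2"
  have d: "real (Suc b) > 0" by simp
  note defs = posf_def negf_def a_def[symmetric] b_def[symmetric] m_def[symmetric]
  have "(real (posf g N k i) - real (negf g N k i) \<le> real (N*N) * xv \<and>
    real (N*N) * xv - 1 < real (posf g N k i) - real (negf g N k i) \<and>
    real (N*N) * xv < real (posf g N k i) + 1 \<and>
    real (posf g N k i) \<le> max 0 (real (N*N) * xv))"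
  proof (cases "even a")
    case True
    let ?p = "N*N*m"
    have x: "real (N*N) * xv = real ?p / real (Suc b)"
      unfolding xv_eq a_def[symmetric] b_def[symmetric] using True by (simp add: int_decode_eq m_def)
    have pos: "posf g N k i = ?p div Suc b" "negf g N k i = 0" using True by (simp_all add: defs)
    have 1: "real (?p div Suc b) \<le> real ?p / real (Suc b)" using L1[of ?p b] d by (simp add: field_simps)
    have 2: "real ?p / real (Suc b) < real (?p div Suc b) + 1" using L2[of ?p b] d by (simp add: field_simps)
    show ?thesis unfolding x pos using 1 2 by auto
  next
    case False
    let ?p = "N*N*(m+1)"
    have x: "real (N*N) * xv = - (real ?p / real (Suc b))"
      unfolding xv_eq a_def[symmetric] b_def[symmetric] using False by (simp add: int_decode_eq m_def field_simps)
    have pos: "posf g N k i = 0" "negf g N k i = (?p + b) div Suc b" using False by (simp_all add: defs)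
    have 3: "real ?p / real (Suc b) \<le> real ((?p + b) div Suc b)" using L3[of ?p b] d by (simp add: field_simps)
    have 4: "real ((?p + b) div Suc b) < real ?p / real (Suc b) + 1" using L4[of ?p b] d by (simp add: field_simps)
    have 5: "0 \<le> real ?p / real (Suc b)" by simp
    show ?thesis unfolding x pos using 3 4 5 by auto
  qed
  then show "real (posf g N k i) - real (negf g N k i) \<le> real (N*N) * xv"
    "real (N*N) * xv - 1 < real (posf g N k i) - real (negf g N k i)"
    "real (N*N) * xv < real (posf g N k i) + 1"
    "real (posf g N k i) \<le> max 0 (real (N*N) * xv)" by auto
qed

end


definition k0f :: "(nat \<Rightarrow> nat \<Rightarrow> nat \<Rightarrow> nat \<Rightarrow> nat) \<Rightarrow> nat \<Rightarrow> nat" where "k0f g N = (LEAST k. Qf g N k)"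
definition sigm :: "(nat \<Rightarrow> nat \<Rightarrow> nat \<Rightarrow> nat \<Rightarrow> nat) \<Rightarrow> nat \<Rightarrow> cmat" where "sigm g N = (if \<exists>k. Qf g N k then unitm (i0f g N (k0f g N)) else (\<lambda>i j. 0))"
definition fsig :: "(nat \<Rightarrow> nat \<Rightarrow> nat \<Rightarrow> nat \<Rightarrow> nat) \<Rightarrow> nat \<Rightarrow> nat \<Rightarrow> cmat" where "fsig g N k = (\<lambda>i j. gauss_rat_of_code (sigc g N k i j))"

lemma Kf_prop:
  "(Kf g N k \<le> k \<longleftrightarrow> (\<exists>k'\<le>k. Qf g N k')) \<and> ((\<exists>k'\<le>k. Qf g N k') \<longrightarrow> Kf g N k = k0f g N)"
proof (cases "\<exists>k'\<le>k. Qf g N k'")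
  case True
  then obtain k' where k': "k' \<le> k" "Qf g N k'" by blast
  have q0: "Qf g N (k0f g N)" unfolding k0f_def using LeastI[of "Qf g N" k'] k'(2) by simp
  have l0: "k0f g N \<le> k'" unfolding k0f_def using Least_le[of "Qf g N" k'] k'(2) by simp
  have "Kf g N k = k0f g N" unfolding Kf_def
  proof (rule Least_equality)
    show "k0f g N \<le> k \<longrightarrow> Qf g N (k0f g N)" using q0 by simp
    fix y assume "y \<le> k \<longrightarrow> Qf g N y"
    then show "k0f g N \<le> y"
      using l0 k'(1) by (metis k0f_def Least_le nle_le order_trans)
  qed
  then show ?thesis using True l0 k'(1) by auto
next
  case False
  have "Kf g N k = Suc k" unfolding Kf_def
  proof (rule Least_equality)
    show "Suc k \<le> k \<longrightarrow> Qf g N (Suc k)" by simp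
    fix y assume "y \<le> k \<longrightarrow> Qf g N y"
    then show "Suc k \<le> y" using False by (metis not_less_eq_eq)
  qed
  then show ?thesis using False by auto
qed

lemma fsig_eq: "fsig g N k = (if \<exists>k'\<le>k. Qf g N k' then unitm (i0f g N (k0f g N)) else (\<lambda>i j. 0))"
proof (cases "\<exists>k'\<le>k. Qf g N k'")
  case True
  then have "Kf g N k \<le> k" "Kf g N k = k0f g N" using Kf_prop[of g N k] by auto
  then show ?thesis using True unfolding fsig_def sigc_def unitm_def by (auto simp: gauss0 gauss1 fun_eq_iff)
next
  case False
  then have "\<not> Kf g N k \<le> k" using Kf_prop[of g N k] by auto
  then show ?thesis using False unfolding fsig_def sigc_def by (auto simp: gauss0 fun_eq_iff)
qed

lemma psd_diff_self: "psd N (\<lambda>i j. A i j - A i j)"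
  using psd_zero by simp

lemma lsc_sig: assumes tr: "total_recursive4 g" shows "lsc_semi_density (sigm g)"
proof -
  have A: "\<forall>N\<ge>1. hermitian N (sigm g N) \<and> psd N (sigm g N) \<and> Re (mtrace N (sigm g N)) \<le> 1"
  proof (intro allI impI conjI)
    fix N :: nat
    show p: "psd N (sigm g N)" unfolding sigm_def using psd_unitm psd_zero by auto
    then show "hermitian N (sigm g N)" unfolding psd_def by simp
    show "Re (mtrace N (sigm g N)) \<le> 1" unfolding sigm_def using trace_unitm by (auto simp: mtrace_def)
  qed
  have B: "\<exists>g'. total_recursive4 g' \<and>
             (\<forall>N\<ge>1. \<forall>k i j. i < N \<longrightarrow> j < N \<longrightarrow> fsig g N k i j = gauss_rat_of_code (g' N k i j))"
    by (rule exI[of _ "sigc g"]) (simp add: fsig_def tr_sigc[OF tr])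
  have C: "\<forall>N\<ge>1. \<forall>k. Her_Q N (fsig g N k)"
  proof (intro allI impI)
    fix N k :: nat
    show "Her_Q N (fsig g N k)" unfolding fsig_eq Her_Q_def hermitian_def unitm_def by auto
  qed
  have D: "\<forall>N\<ge>1. \<forall>k. loewner_le N (fsig g N k) (fsig g N (Suc k))"
  proof (intro allI impI)
    fix N k :: nat
    have a: "(\<exists>k'\<le>k. Qf g N k') \<Longrightarrow> (\<exists>k'\<le>Suc k. Qf g N k')" by (meson le_SucI)
    show "loewner_le N (fsig g N k) (fsig g N (Suc k))"
      unfolding loewner_le_def fsig_eq using a psd_diff_self psd_unitm psd_zero by auto
  qed
  have E: "\<forall>N\<ge>1. \<forall>i<N. \<forall>j<N. (\<lambda>k. fsig g N k i j) \<longlonglongrightarrow> sigm g N i j"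
  proof (intro allI impI)
    fix N i j :: nat
    show "(\<lambda>k. fsig g N k i j) \<longlonglongrightarrow> sigm g N i j"
    proof (cases "\<exists>k. Qf g N k")
      case True
      then obtain k1 where "Qf g N k1" by blast
      then have "\<forall>k\<ge>k1. fsig g N k i j = sigm g N i j"
        unfolding fsig_eq sigm_def using True by auto
      then have "eventually (\<lambda>k. fsig g N k i j = sigm g N i j) sequentially"
        using eventually_sequentially by blast
      then show ?thesis by (rule tendsto_eventually)
    next
      case False
      then have "\<And>k. fsig g N k i j = sigm g N i j" unfolding fsig_eq sigm_def by auto
      then show ?thesis by simp
    qed
  qed
  show ?thesis unfolding lsc_semi_density_def
    by (rule conjI[OF A exI[of _ "fsig g"]]) (use B C D E in blast)
qed



lemma bad_bound:
  fixes \<mu> :: "nat \<Rightarrow> cmat" and f :: "nat \<Rightarrow> nat \<Rightarrow> cmat" and g and c :: real and N :: nat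
  assumes N1: "N \<ge> 1"
    and fg: "\<forall>N\<ge>1. \<forall>k i j. i < N \<longrightarrow> j < N \<longrightarrow> f N k i j = gauss_rat_of_code (g N k i j)"
    and mono: "\<forall>N\<ge>1. \<forall>k. loewner_le N (f N k) (f N (Suc k))"
    and lim: "\<forall>N\<ge>1. \<forall>i<N. \<forall>j<N. (\<lambda>k. f N k i j) \<longlonglongrightarrow> \<mu> N i j"
    and trle: "Re (mtrace N (\<mu> N)) \<le> 1"
    and bad: "\<not> Re (mtrace N (\<mu> N)) < 1"
    and dom: "loewner_le N (\<lambda>i j. complex_of_real c * sigm g N i j) (\<mu> N)"
  shows "real N * c \<le> 4"
proof -
  define x where "x k i = Re (f N k i i)" for k i
  define D where "D = real (N*N)"
  have Npos: "real N > 0" using N1 by simp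
  have Dpos: "D > 0" unfolding D_def using N1 by simp
  have xv: "x k i = xv g N k i" if "i < N" for k i
    unfolding x_def xv_def using fg N1 that by simp
  have incr: "x k i \<le> x (Suc k) i" if "i < N" for k i
  proof -
    have "psd N (\<lambda>a b. f N (Suc k) a b - f N k a b)" using mono N1 unfolding loewner_le_def by blast
    from psd_diag[OF this that] show ?thesis unfolding x_def by simp
  qed
  have conv: "(\<lambda>k. x k i) \<longlonglongrightarrow> Re (\<mu> N i i)" if "i < N" for i
    unfolding x_def using lim N1 that by (intro tendsto_Re) blast
  have le_mu: "x k i \<le> Re (\<mu> N i i)" if "i < N" for k i
    by (rule incseq_le[OF _ conv[OF that]]) (simp add: incseq_SucI incr[OF that])
  have tr1: "(\<Sum>i<N. Re (\<mu> N i i)) = 1"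
    using trle bad unfolding mtrace_def by (simp add: Re_sum)
  have sumconv: "(\<lambda>k. \<Sum>i<N. x k i) \<longlonglongrightarrow> 1"
    unfolding tr1[symmetric] by (intro tendsto_sum conv) simp
  have "1 - 1 / real N < 1" using Npos by simp
  from order_tendstoD(1)[OF sumconv this] obtain k1 where k1: "1 - 1 / real N < (\<Sum>i<N. x k1 i)"
    by (metis (no_types, lifting) eventually_sequentially order_refl)
  define P where "P k = (\<Sum>i<N. real (posf g N k i))" for k
  define Ng where "Ng k = (\<Sum>i<N. real (negf g N k i))" for k
  have sum_lo: "D * (\<Sum>i<N. x k i) - real N < P k - Ng k" for k
  proof -
    have "(\<Sum>i<N. D * x k i - 1) < (\<Sum>i<N. real (posf g N k i) - real (negf g N k i))"
      by (rule sum_strict_mono) (use N1 code_bounds(2) xv D_def in \<open>auto simp: lessThan_empty_iff\<close>)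
    then show ?thesis unfolding P_def Ng_def by (simp add: sum_subtractf sum_distrib_left)
  qed
  have sum_hi: "P k - Ng k \<le> D * (\<Sum>i<N. x k i)" for k
  proof -
    have "(\<Sum>i<N. real (posf g N k i) - real (negf g N k i)) \<le> (\<Sum>i<N. D * x k i)"
      by (rule sum_mono) (use code_bounds(1) xv D_def in auto)
    then show ?thesis unfolding P_def Ng_def by (simp add: sum_subtractf sum_distrib_left)
  qed
  have DN: "D * (1 - 1 / real N) = D - real N" unfolding D_def using Npos by (simp add: field_simps)
  have "Qf g N k1"
  proof -
    have "D * (1 - 1 / real N) < D * (\<Sum>i<N. x k1 i)" using k1 Dpos by simp
    then have "D - 2 * real N < P k1 - Ng k1" using sum_lo[of k1] DN by simp
    then have "real (N*N + (\<Sum>i<N. negf g N k1 i)) < real ((\<Sum>i<N. posf g N k1 i) + 2*N)"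
      unfolding P_def Ng_def D_def by simp
    then show ?thesis unfolding Qf_def by linarith
  qed
  define k0 where "k0 = k0f g N"
  have Qk0: "Qf g N k0" unfolding k0_def k0f_def using LeastI[of "Qf g N" k1] \<open>Qf g N k1\<close> by simp
  have sx0: "D - 2 * real N \<le> D * (\<Sum>i<N. x k0 i)"
  proof -
    have "real (N*N + (\<Sum>i<N. negf g N k0 i)) \<le> real ((\<Sum>i<N. posf g N k0 i) + 2*N)"
      using Qk0 unfolding Qf_def by linarith
    then have "D - 2 * real N \<le> P k0 - Ng k0" unfolding P_def Ng_def D_def by simp
    then show ?thesis using sum_hi[of k0] by simp
  qed
  obtain i1 where i1: "i1 < N" "real N * Re (\<mu> N i1 i1) \<le> 1"
  proof (rule ccontr)
    assume "\<not> thesis"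
    then have h: "\<forall>i<N. 1 < real N * Re (\<mu> N i i)" using that by force
    have "(\<Sum>i<N. 1) < (\<Sum>i<N. real N * Re (\<mu> N i i))"
      by (rule sum_strict_mono) (use N1 h in \<open>auto simp: lessThan_empty_iff\<close>)
    then show False using tr1 by (simp add: sum_distrib_left[symmetric])
  qed
  have "real N * x k0 i1 \<le> 1"
    using mult_left_mono[OF le_mu[OF i1(1), of k0], of "real N"] i1(2) by simp
  then have "real N * (real N * x k0 i1) \<le> real N * 1"
    using Npos by (intro mult_left_mono) auto
  then have Dx1: "D * x k0 i1 \<le> real N" unfolding D_def by (simp add: algebra_simps)
  have "real (posf g N k0 i1) \<le> real N"
    using code_bounds(4)[where g=g and N=N and k=k0 and i=i1] xv[OF i1(1)] Dx1 unfolding D_def by (simp add: max_def split: if_splits)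
  then have pi1: "posf g N k0 i1 \<le> N" by simp
  define i0 where "i0 = i0f g N k0"
  have "N \<le> i0 \<or> posf g N k0 i0 \<le> N"
    unfolding i0_def i0f_def by (rule LeastI[of _ i1]) (use pi1 in simp)
  moreover have "i0 \<le> i1" unfolding i0_def i0f_def by (rule Least_le) (use pi1 in simp)
  ultimately have i0: "i0 < N" "posf g N k0 i0 \<le> N" using i1(1) by auto
  have Dx0: "D * x k0 i0 < real N + 1"
    using code_bounds(3)[where g=g and N=N and k=k0 and i=i0] xv[OF i0(1)] i0(2) unfolding D_def by simp
  have "Re (\<mu> N i0 i0) - x k0 i0 \<le> (\<Sum>i<N. Re (\<mu> N i i) - x k0 i)"
    by (rule member_le_sum[of i0 "{..<N}" "\<lambda>i. Re (\<mu> N i i) - x k0 i"]) (use i0 le_mu in auto)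
  also have "\<dots> = 1 - (\<Sum>i<N. x k0 i)" using tr1 by (simp add: sum_subtractf)
  finally have "Re (\<mu> N i0 i0) - x k0 i0 \<le> 1 - (\<Sum>i<N. x k0 i)" .
  then have "D * (Re (\<mu> N i0 i0) - x k0 i0) \<le> D * (1 - (\<Sum>i<N. x k0 i))"
    using Dpos by (intro mult_left_mono) auto
  then have "D * Re (\<mu> N i0 i0) \<le> D * x k0 i0 + D * (1 - (\<Sum>i<N. x k0 i))"
    by (simp add: algebra_simps)
  also have "\<dots> \<le> D * x k0 i0 + 2 * real N" using sx0 by (simp add: algebra_simps)
  finally have muN: "D * Re (\<mu> N i0 i0) \<le> 3 * real N + 1" using Dx0 by simp
  have "sigm g N = unitm i0" unfolding sigm_def i0_def k0_def using \<open>Qf g N k1\<close> by auto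
  then have "psd N (\<lambda>i j. \<mu> N i j - complex_of_real c * unitm i0 i j)" using dom unfolding loewner_le_def by simp
  from psd_diag[OF this i0(1)] have "c \<le> Re (\<mu> N i0 i0)" by (simp add: unitm_def)
  then have "D * c \<le> 3 * real N + 1" using muN Dpos by (smt (verit) mult_left_mono)
  moreover have "3 * real N + 1 \<le> real N * 4" using N1 by simp
  moreover have "D * c = real N * (real N * c)" unfolding D_def by simp
  ultimately have "real N * (real N * c) \<le> real N * 4" by linarith
  then show ?thesis using Npos by (rule mult_left_le_imp_le)
qed

theorem mainTheorem14:
  assumes "quantum_universal \<mu>"
  shows "finite {N :: nat. N \<ge> 1 \<and> \<not> Re (mtrace N (\<mu> N)) < 1}"
proof -
  have lsc: "lsc_semi_density \<mu>" and univ: "\<forall>\<sigma>. lsc_semi_density \<sigma> \<longrightarrow>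
        (\<exists>c>0. \<forall>N\<ge>1. loewner_le N (\<lambda>i j. complex_of_real c * \<sigma> N i j) (\<mu> N))"
    using assms unfolding quantum_universal_def by auto
  have L: "(\<forall>N\<ge>1. hermitian N (\<mu> N) \<and> psd N (\<mu> N) \<and> Re (mtrace N (\<mu> N)) \<le> 1) \<and>
     (\<exists>f :: nat \<Rightarrow> nat \<Rightarrow> cmat.
        (\<exists>g. total_recursive4 g \<and>
             (\<forall>N\<ge>1. \<forall>k i j. i < N \<longrightarrow> j < N \<longrightarrow> f N k i j = gauss_rat_of_code (g N k i j))) \<and>
        (\<forall>N\<ge>1. \<forall>k. Her_Q N (f N k)) \<and>
        (\<forall>N\<ge>1. \<forall>k. loewner_le N (f N k) (f N (Suc k))) \<and>
        (\<forall>N\<ge>1. \<forall>i<N. \<forall>j<N. (\<lambda>k. f N k i j) \<longlonglongrightarrow> \<mu> N i j))"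
    using lsc unfolding lsc_semi_density_def .
  then have trace: "\<forall>N\<ge>1. hermitian N (\<mu> N) \<and> psd N (\<mu> N) \<and> Re (mtrace N (\<mu> N)) \<le> 1"
    by (rule conjunct1)
  from L[THEN conjunct2] obtain f :: "nat \<Rightarrow> nat \<Rightarrow> cmat" where
    F: "(\<exists>g. total_recursive4 g \<and>
             (\<forall>N\<ge>1. \<forall>k i j. i < N \<longrightarrow> j < N \<longrightarrow> f N k i j = gauss_rat_of_code (g N k i j)))
    \<and> (\<forall>N\<ge>1. \<forall>k. Her_Q N (f N k)) \<and>
        (\<forall>N\<ge>1. \<forall>k. loewner_le N (f N k) (f N (Suc k))) \<and>
        (\<forall>N\<ge>1. \<forall>i<N. \<forall>j<N. (\<lambda>k. f N k i j) \<longlonglongrightarrow> \<mu> N i j)"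
    by (rule exE)
  note f = F[THEN conjunct1] and fr = F[THEN conjunct2, THEN conjunct2]
  from f obtain g where tr: "total_recursive4 g" and
    fg: "\<forall>N\<ge>1. \<forall>k i j. i < N \<longrightarrow> j < N \<longrightarrow> f N k i j = gauss_rat_of_code (g N k i j)"
    by (elim exE conjE)
  note mono = fr[THEN conjunct1] and lim = fr[THEN conjunct2]
  from univ[THEN spec[of _ "sigm g"]] have "\<exists>c>0. \<forall>N\<ge>1. loewner_le N (\<lambda>i j. complex_of_real c * sigm g N i j) (\<mu> N)"
    using lsc_sig[OF tr] by (rule mp)
  then obtain c where c: "c > 0"
    and dom: "\<forall>N\<ge>1. loewner_le N (\<lambda>i j. complex_of_real c * sigm g N i j) (\<mu> N)" by (elim exE conjE)
  have "{N :: nat. N \<ge> 1 \<and> \<not> Re (mtrace N (\<mu> N)) < 1} \<subseteq> {..nat (ceiling (4 / c))}"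
  proof
    fix N assume "N \<in> {N :: nat. N \<ge> 1 \<and> \<not> Re (mtrace N (\<mu> N)) < 1}"
    then have N: "N \<ge> 1" "\<not> Re (mtrace N (\<mu> N)) < 1" by auto
    have "real N * c \<le> 4"
      by (rule bad_bound[OF N(1) fg mono lim _ N(2)]) (use trace dom N(1) in auto)
    then have "real N \<le> 4 / c" using c by (simp add: field_simps)
    then have "real N \<le> real (nat (ceiling (4 / c)))" by linarith
    then show "N \<in> {..nat (ceiling (4 / c))}" by simp
  qed
  then show ?thesis by (rule finite_subset) simp
qed


end
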